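(* For $n\in\{0,1,2,\dots\}$ and $x\in(-1,1)$ let $e_n(x)=\mathrm{e}\bigl(1+\sum_{k=1}^n(-1)^k f_k x^k\bigr)$. Then: (i) if $x\in(0,1)$, then for every $k\ge1$, $$e_1(x)<e_3(x)<\dots<e_{2k-1}(x)<e_{2k+1}(x)<\dots<e(x)<\dots<e_{2k+2}(x)<e_{2k}(x)<\dots<e_2(x)<e_0(x),$$ i.e. the odd-indexed $e_{2k-1}(x)$ strictly increase and are all $<e(x)$, the even-indexed $e_{2k}(x)$ strictly decrease and are all $>e(x)$; (ii) if $x\in(-1,0)$, then $e_0(x)<e_1(x)<e_2(x)<\dots<e_n(x)<e_{n+1}(x)<\dots<e(x)$, i.e. $e_n(x)$ is strictly increasing in $n$ and $e_n(x)<e(x)$ for all $n$; (iii) $e_n(0)=e(0)=\mathrm{e}$ for all $n\ge0$.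
   Context: Let $e(x)=(1+x)^{1/x}$ for $x>-1$, $x\neq 0$, and $e(0)=\mathrm{e}$. For $x\in(-1,1)$, $e(x)=\mathrm{e}\bigl(1+\sum_{k=1}^\infty e_k x^k\bigr)$, with $e_0=1$; equivalently $e_k=\mathrm{e}^{-1}\sum_{i=1}^\infty \frac{S_1(k+i,i)}{(k+i)!}$ for $k\ge1$, where $S_1(p,q)$ are the signed Stirling numbers of the first kind (sign $(-1)^{p-q}$). Define $f_k=(-1)^k e_k$, so that $e(x)=\mathrm{e}\bigl(1+\sum_{k\ge1}(-1)^kf_kx^k\bigr)$. *)

theory Defs
  imports "HOL-Analysis.Analysis" "HOL-Combinatorics.Stirling"
begin

definition efun :: "real \<Rightarrow> real" where
  "efun x = (if x = 0 then exp 1 else (1 + x) powr (1 / x))"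

definition S1 :: "nat \<Rightarrow> nat \<Rightarrow> real" where
  "S1 p q = (-1) ^ (p - q) * real (stirling p q)"

definition ecoef :: "nat \<Rightarrow> real" where
  "ecoef k = (if k = 0 then 1
     else exp (-1) * (\<Sum>i. S1 (k + Suc i) (Suc i) / fact (k + Suc i)))"

definition fcoef :: "nat \<Rightarrow> real" where
  "fcoef k = (-1) ^ k * ecoef k"

definition epart :: "nat \<Rightarrow> real \<Rightarrow> real" where
  "epart n x = exp 1 * (1 + (\<Sum>k=1..n. (-1) ^ k * fcoef k * x ^ k))"

end

theory Submission
  imports Defs "HOL-Analysis.FPS_Convergence"
begin


lemma term_eq:
  fixes x :: real
  assumes "i \<le> n" "x \<noteq> 0"
  shows "(-1)^n * (-(1/x))^i * x^n = (-1)^(n-i) * x^(n-i)"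
proof -
  obtain d where n: "n = i + d" using assms(1) by (metis le_add_diff_inverse)
  have a: "(-1::real)^i * (-1)^i = 1" by (simp flip: power_mult_distrib)
  have b: "(1/x)^i * x^i = 1" using assms(2) by (simp flip: power_mult_distrib)
  have "(-1::real)^n * (-(1/x))^i * x^n = ((-1)^i * (-1)^i) * ((1/x)^i * x^i) * ((-1)^d * x^d)"
    unfolding n power_add power_minus[of "1/x"] by (simp only: mult_ac)
  also have "\<dots> = (-1)^d * x^d" by (simp only: a b mult_1)
  finally show ?thesis using n by simp
qed

lemma row_id:
  fixes x :: real
  assumes "x \<noteq> 0"
  shows "(\<Sum>i\<le>n. S1 n i * x^(n-i) / fact n) = ((1/x) gchoose n) * x^n"
proof -
  have "((1/x) gchoose n) * x^n = (-1)^n * pochhammer (-(1/x)) n / fact n * x^n"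
    by (simp add: gbinomial_pochhammer)
  also have "pochhammer (-(1/x)) n = (\<Sum>i\<le>n. real (stirling n i) * (-(1/x))^i)"
    by (simp add: stirling_pochhammer)
  also have "(-1)^n * \<dots> / fact n * x^n = (\<Sum>i\<le>n. real (stirling n i) * ((-1)^n * (-(1/x))^i * x^n) / fact n)"
    by (simp add: sum_distrib_left sum_distrib_right sum_divide_distrib algebra_simps)
  also have "\<dots> = (\<Sum>i\<le>n. S1 n i * x^(n-i) / fact n)"
    by (intro sum.cong refl) (simp add: term_eq assms S1_def)
  finally show ?thesis by simp
qed

lemma row_id_abs:
  fixes s :: real
  assumes "s > 0"
  shows "(\<Sum>i\<le>n. real (stirling n i) * s^(n-i) / fact n) = ((-1/s) gchoose n) * (-s)^n"
proof -
  have g: "((-1/s) gchoose n) = (-1)^n * pochhammer (1/s) n / fact n"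
    using gbinomial_pochhammer[of "-1/s" n] by simp
  have m: "(-s)^n = (-1)^n * s^n" by (rule power_minus)
  have a: "(-1::real)^n * (-1)^n = 1" by (simp flip: power_mult_distrib)
  have "((-1/s) gchoose n) * (-s)^n = ((-1)^n * (-1)^n) * pochhammer (1/s) n * s^n / fact n"
    unfolding g m by (simp only: mult_ac times_divide_eq_left times_divide_eq_right)
  also have "\<dots> = pochhammer (1/s) n * s^n / fact n" by (simp only: a mult_1)
  also have "pochhammer (1/s) n = (\<Sum>i\<le>n. real (stirling n i) * (1/s)^i)"
    by (rule stirling_pochhammer[symmetric])
  also have "\<dots> * s^n / fact n = (\<Sum>i\<le>n. real (stirling n i) * ((1/s)^i * s^n) / fact n)"
    by (simp only: sum_distrib_right sum_divide_distrib mult.assoc)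
  also have "\<dots> = (\<Sum>i\<le>n. real (stirling n i) * s^(n-i) / fact n)"
  proof (intro sum.cong refl)
    fix i assume "i \<in> {..n}"
    hence "i \<le> n" by simp
    then obtain d where n: "n = i + d" by (metis le_add_diff_inverse)
    have b: "(1/s)^i * s^i = 1" using assms by (simp flip: power_mult_distrib)
    have "(1/s)^i * s^n = ((1/s)^i * s^i) * s^d" unfolding n power_add by (simp only: mult_ac)
    also have "\<dots> = s^(n-i)" using n b by simp
    finally show "real (stirling n i) * ((1/s)^i * s^n) / fact n = real (stirling n i) * s^(n-i) / fact n"
      by simp
  qed
  finally show ?thesis by simp
qed

definition PP :: "(nat \<times> nat) set" where "PP = Sigma UNIV (\<lambda>n. {..n})"

definition Tabs :: "real \<Rightarrow> nat \<times> nat \<Rightarrow> real" where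
  "Tabs s p = real (stirling (fst p) (snd p)) * s^(fst p - snd p) / fact (fst p)"

definition Tsg :: "real \<Rightarrow> nat \<times> nat \<Rightarrow> real" where
  "Tsg x p = S1 (fst p) (snd p) * x^(fst p - snd p) / fact (fst p)"

lemma Tabs_nonneg: "s \<ge> 0 \<Longrightarrow> Tabs s p \<ge> 0"
  unfolding Tabs_def by simp

lemma Tabs_has_sum:
  fixes s :: real
  assumes "0 < s" "s < 1"
  shows "(Tabs s has_sum ((1 - s) powr (-1/s))) PP"
proof -
  define r where "r n = (\<Sum>i\<le>n. Tabs s (n,i))" for n
  have rows: "((\<lambda>i. Tabs s (n, i)) has_sum r n) {..n}" for n
    unfolding r_def by (rule has_sum_finite) simp
  have "r = (\<lambda>n. ((-1/s) gchoose n) * (-s)^n)"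
    unfolding r_def Tabs_def using row_id_abs[OF assms(1)] by (intro ext) simp
  moreover have "(\<lambda>n. ((-1/s) gchoose n) * (-s)^n) sums (1 + - s) powr (-1/s)"
    by (rule gen_binomial_real) (use assms in auto)
  ultimately have "r sums (1 - s) powr (-1/s)" by simp
  hence rs: "(r has_sum (1 - s) powr (-1/s)) UNIV"
    by (rule sums_nonneg_imp_has_sum) (use assms in \<open>auto simp: r_def intro!: sum_nonneg Tabs_nonneg\<close>)
  have "Tabs s summable_on Sigma UNIV (\<lambda>n. {..n})"
    by (rule summable_on_SigmaI[OF rows]) (use rs assms in \<open>auto intro: has_sum_imp_summable Tabs_nonneg\<close>)
  thus ?thesis unfolding PP_def
    by (intro has_sum_SigmaI[OF rows rs])
qed

lemma Tsg_has_sum: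
  fixes x :: real
  assumes "\<bar>x\<bar> < 1" "x \<noteq> 0"
  shows "(Tsg x has_sum ((1 + x) powr (1/x))) PP"
proof -
  have ax: "0 < \<bar>x\<bar>" "\<bar>x\<bar> < 1" using assms by auto
  have "Tabs \<bar>x\<bar> summable_on PP" using Tabs_has_sum[OF ax] by (rule has_sum_imp_summable)
  hence ts: "(\<lambda>p. norm (Tabs \<bar>x\<bar> p)) summable_on PP"
    by (rule summable_on_cong[THEN iffD1, rotated]) (auto simp: Tabs_nonneg)
  have "(\<lambda>p. norm (Tsg x p)) summable_on PP"
    by (rule Infinite_Sum.abs_summable_on_comparison_test[OF ts])
       (auto simp: Tabs_def Tsg_def S1_def abs_mult power_abs)
  hence sm: "Tsg x summable_on PP" by (rule abs_summable_summable)
  have rows: "((\<lambda>i. Tsg x (n, i)) has_sum ((1/x) gchoose n) * x^n) {..n}" for n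
    using has_sum_finite[of "{..n}" "\<lambda>i. Tsg x (n, i)"] row_id[OF assms(2), of n]
    by (simp add: Tsg_def)
  have "((\<lambda>n. ((1/x) gchoose n) * x^n) has_sum infsum (Tsg x) PP) UNIV"
    using has_sum_SigmaD[where f="Tsg x" and A=UNIV and B="\<lambda>n. {..n}", OF _ rows] sm
    unfolding PP_def by (simp add: has_sum_infsum)
  hence "(\<lambda>n. ((1/x) gchoose n) * x^n) sums infsum (Tsg x) PP" by (rule has_sum_imp_sums)
  moreover have "(\<lambda>n. ((1/x) gchoose n) * x^n) sums (1 + x) powr (1/x)"
    by (rule gen_binomial_real) (use assms in auto)
  ultimately have eq: "infsum (Tsg x) PP = (1 + x) powr (1/x)" by (rule sums_unique2)
  show ?thesis using has_sum_infsum[OF sm] unfolding eq .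
qed



definition T2 :: "real \<Rightarrow> nat \<times> nat \<Rightarrow> real" where
  "T2 x p = S1 (fst p + snd p) (snd p) * x^(fst p) / fact (fst p + snd p)"

lemma T2_has_sum:
  fixes x :: real
  assumes "\<bar>x\<bar> < 1" "x \<noteq> 0"
  shows "(T2 x has_sum ((1 + x) powr (1/x))) UNIV"
proof -
  have bij: "bij_betw (\<lambda>(k,i). (k+i, i)) UNIV PP"
    by (rule bij_betw_byWitness[where f'="\<lambda>(n,i). (n-i, i)"]) (auto simp: PP_def)
  have "((\<lambda>q. Tsg x ((\<lambda>(k,i). (k+i, i)) q)) has_sum ((1 + x) powr (1/x))) UNIV"
    using has_sum_reindex_bij_betw[OF bij] Tsg_has_sum[OF assms] by blast
  moreover have "(\<lambda>q. Tsg x ((\<lambda>(k,i). (k+i, i)) q)) = T2 x"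
    by (auto simp: Tsg_def T2_def fun_eq_iff)
  ultimately show ?thesis by simp
qed

definition Acoef :: "nat \<Rightarrow> real" where
  "Acoef k = infsum (\<lambda>i. S1 (k+i) i / fact (k+i)) UNIV"

lemma row_summable: "(\<lambda>i. S1 (k+i) i / fact (k+i)) summable_on UNIV"
proof -
  have "T2 (1/2) summable_on UNIV" using T2_has_sum[of "1/2"] has_sum_imp_summable by force
  hence "(\<lambda>(k,i). T2 (1/2) (k,i)) summable_on Sigma UNIV (\<lambda>_. UNIV)" by simp
  hence "(\<lambda>i. T2 (1/2) (k,i)) summable_on UNIV"
    using summable_on_SigmaD1[where f="\<lambda>k i. T2 (1/2) (k,i)" and A=UNIV and B="\<lambda>_. UNIV"] by auto
  hence "(\<lambda>i. (2^k) * T2 (1/2) (k,i)) summable_on UNIV" by (rule summable_on_cmult_right)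
  moreover have "(\<lambda>i. (2^k) * T2 (1/2) (k,i)) = (\<lambda>i. S1 (k+i) i / fact (k+i))"
    by (auto simp: T2_def fun_eq_iff power_one_over)
  ultimately show ?thesis by simp
qed

lemma series_A:
  fixes x :: real
  assumes "\<bar>x\<bar> < 1" "x \<noteq> 0"
  shows "(\<lambda>k. Acoef k * x^k) sums ((1 + x) powr (1/x))"
proof -
  have hs: "(T2 x has_sum ((1 + x) powr (1/x))) (Sigma UNIV (\<lambda>_. UNIV))"
    using T2_has_sum[OF assms] by simp
  have rows: "((\<lambda>i. T2 x (k, i)) has_sum (Acoef k * x^k)) UNIV" for k
  proof -
    have "((\<lambda>i. x^k * (S1 (k+i) i / fact (k+i))) has_sum (x^k * Acoef k)) UNIV"
      unfolding Acoef_def by (intro has_sum_cmult_right has_sum_infsum row_summable)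
    moreover have "(\<lambda>i. x^k * (S1 (k+i) i / fact (k+i))) = (\<lambda>i. T2 x (k, i))"
      by (auto simp: T2_def fun_eq_iff)
    ultimately show ?thesis by (simp add: mult.commute)
  qed
  have "((\<lambda>k. Acoef k * x^k) has_sum ((1 + x) powr (1/x))) UNIV"
    by (rule has_sum_SigmaD[OF hs rows])
  thus ?thesis by (rule has_sum_imp_sums)
qed

lemma Acoef_ecoef: "Acoef k = exp 1 * ecoef k"
proof -
  define a where "a i = S1 (k+i) i / fact (k+i)" for i
  have "(a has_sum Acoef k) UNIV" unfolding Acoef_def a_def by (intro has_sum_infsum row_summable)
  hence sa: "a sums Acoef k" by (rule has_sum_imp_sums)
  show ?thesis
  proof (cases "k = 0")
    case True
    have ae: "a = (\<lambda>i. 1^i /\<^sub>R fact i)" using True by (auto simp: a_def S1_def fun_eq_iff divide_inverse)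
    have "a sums exp 1" unfolding ae by (rule exp_converges)
    hence "Acoef k = exp 1" using sa sums_unique2 by blast
    thus ?thesis using True by (simp add: ecoef_def)
  next
    case False
    have "a 0 = 0" using False by (simp add: a_def S1_def)
    hence "(\<lambda>i. a (Suc i)) sums Acoef k" using sa sums_Suc_iff[of a "Acoef k"] by simp
    hence "Acoef k = (\<Sum>i. S1 (k + Suc i) (Suc i) / fact (k + Suc i))"
      by (simp add: a_def sums_iff)
    thus ?thesis using False by (simp add: ecoef_def exp_minus field_simps)
  qed
qed

lemma series_e:
  fixes x :: real
  assumes "\<bar>x\<bar> < 1"
  shows "(\<lambda>k. exp 1 * ecoef k * x^k) sums efun x"
proof (cases "x = 0")
  case True
  have "(\<lambda>k. (exp 1 * ecoef k) * 0^k) sums (exp 1 * ecoef 0)" by (rule powser_sums_zero)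
  thus ?thesis using True by (simp add: efun_def ecoef_def)
next
  case False
  show ?thesis using series_A[OF assms False] False by (simp add: Acoef_ecoef efun_def)
qed



lemma fps_real_unique:
  fixes F :: "real fps"
  assumes r: "r > 0" "fps_conv_radius F \<ge> ereal r"
  assumes z: "\<And>t. \<bar>t\<bar> < r \<Longrightarrow> eval_fps F t = 0"
  shows "F = 0"
proof (rule ccontr)
  assume F: "F \<noteq> 0"
  define n where "n = subdegree F"
  define g where "g = eval_fps (fps_shift n F)"
  have "ereal 0 < fps_conv_radius F" by (rule less_le_trans[OF _ r(2)]) (use r in simp)
  hence rad: "ereal 0 < fps_conv_radius (fps_shift n F)" by simp
  have "isCont g 0" unfolding g_def
    by (rule continuous_eval_fps) (use rad in \<open>auto simp: zero_ereal_def\<close>)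
  hence lim: "(g \<longlongrightarrow> g 0) (at 0)" by (simp add: isCont_def)
  have key: "g t = 0" if t: "t \<noteq> 0" "\<bar>t\<bar> < r" for t :: real
  proof -
    have "ereal (norm t) < ereal r" using t by simp
    hence "norm t < fps_conv_radius F" by (rule less_le_trans[OF _ r(2)])
    moreover have "n \<le> subdegree F" by (simp add: n_def)
    ultimately have "g t = eval_fps F t / t ^ n" unfolding g_def
      using eval_fps_shift[of n F t] t by simp
    thus "g t = 0" using z[OF t(2)] by simp
  qed
  have ev: "eventually (\<lambda>t. g t = 0) (at (0::real))"
    unfolding eventually_at using r key by (auto simp: dist_real_def intro!: exI[of _ r])
  have "(g \<longlongrightarrow> 0) (at 0)" by (rule tendsto_eventually[OF ev])
  hence "g 0 = 0" using lim tendsto_unique[OF at_neq_bot] by metis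
  moreover have "g 0 = fps_nth F n" unfolding g_def by (simp add: eval_fps_at_0)
  moreover have "fps_nth F n \<noteq> 0" unfolding n_def using F by simp
  ultimately show False by simp
qed

lemma series_f:
  fixes t :: real
  assumes "\<bar>t\<bar> < 1"
  shows "(\<lambda>k. fcoef k * t^k) sums (efun (-t) / exp 1)"
proof -
  have "(\<lambda>k. exp 1 * ecoef k * (-t)^k / exp 1) sums (efun (-t) / exp 1)"
    using series_e[of "-t"] assms by (intro sums_divide) simp
  moreover have "(\<lambda>k. exp 1 * ecoef k * (-t)^k / exp 1) = (\<lambda>k. fcoef k * t^k)"
    by (auto simp: fun_eq_iff fcoef_def power_minus[of t])
  ultimately show ?thesis by simp
qed

lemma aux_div: "(t::real) \<noteq> 0 \<Longrightarrow> t^(Suc n) / of_nat (Suc n) / t = t^n / (real n + 1)"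
proof -
  assume t: "t \<noteq> 0"
  have "t^(Suc n) / of_nat (Suc n) / t = (t^(Suc n) / t) / of_nat (Suc n)"
    by (simp only: divide_divide_eq_left mult.commute)
  also have "t^(Suc n) / t = t^n" using t by (simp add: power_Suc)
  finally show ?thesis by simp
qed

definition lco :: "nat \<Rightarrow> real" where "lco m = (if m = 0 then 0 else 1 / (real m + 1))"

lemma series_l:
  fixes t :: real
  assumes "\<bar>t\<bar> < 1" "t \<noteq> 0"
  shows "(\<lambda>m. lco m * t^m) sums (- ln (1 - t) / t - 1)"
proof -
  have "(\<lambda>n. - ((-(-t))^n) / of_nat n) sums ln (1 + -t)"
    by (rule ln_series') (use assms in simp)
  hence "(\<lambda>n. - (- (t^n) / of_nat n)) sums (- ln (1 - t))"
    by (intro sums_minus) simp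
  hence "(\<lambda>n. t^n / of_nat n) sums (- ln (1 - t))" by simp
  hence "(\<lambda>n. t^(Suc n) / of_nat (Suc n)) sums (- ln (1 - t))"
    using sums_Suc_iff[of "\<lambda>n. t^n / of_nat n"] by simp
  hence "(\<lambda>n. t^(Suc n) / of_nat (Suc n) / t) sums (- ln (1 - t) / t)"
    by (rule sums_divide)
  moreover have "(\<lambda>n. t^(Suc n) / of_nat (Suc n) / t) = (\<lambda>n. t^n / (real n + 1))"
    using assms by (intro ext aux_div)
  ultimately have a: "(\<lambda>n. t^n / (real n + 1)) sums (- ln (1 - t) / t)" by simp
  have b: "(\<lambda>n. if n = 0 then 1 else 0) sums (1::real)"
    using sums_single[of 0 "\<lambda>_. 1::real"] by simp
  have "(\<lambda>n. t^n / (real n + 1) - (if n = 0 then 1 else 0)) sums (- ln (1 - t) / t - 1)"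
    by (rule sums_diff[OF a b])
  moreover have "(\<lambda>n. t^n / (real n + 1) - (if n = 0 then 1 else 0)) = (\<lambda>m. lco m * t^m)"
    by (auto simp: fun_eq_iff lco_def)
  ultimately show ?thesis by simp
qed

definition FH :: "real fps" where "FH = Abs_fps fcoef"
definition FL :: "real fps" where "FL = Abs_fps lco"

lemma rad_FH: "fps_conv_radius FH \<ge> 1"
  unfolding fps_conv_radius_def FH_def fps_nth_Abs_fps
proof (rule conv_radius_geI_ex')
  fix r :: real assume r: "0 < r" "ereal r < 1"
  hence "\<bar>r\<bar> < 1" by simp
  from series_f[OF this] show "summable (\<lambda>n. fcoef n * of_real r ^ n)"
    by (simp add: sums_iff)
qed

lemma rad_FL: "fps_conv_radius FL \<ge> 1"
  unfolding fps_conv_radius_def FL_def fps_nth_Abs_fps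
proof (rule conv_radius_geI_ex')
  fix r :: real assume r: "0 < r" "ereal r < 1"
  hence "\<bar>r\<bar> < 1" "r \<noteq> 0" by simp_all
  from series_l[OF this] show "summable (\<lambda>n. lco n * of_real r ^ n)"
    by (simp add: sums_iff)
qed

lemma in_rad: "\<bar>t::real\<bar> < 1 \<Longrightarrow> fps_conv_radius F \<ge> 1 \<Longrightarrow> ereal (norm t) < fps_conv_radius F"
  by (rule less_le_trans[of _ 1]) (simp_all add: real_norm_def)

lemma eval_FH: "\<bar>t\<bar> < 1 \<Longrightarrow> eval_fps FH t = efun (-t) / exp 1"
  unfolding eval_fps_def FH_def fps_nth_Abs_fps using series_f by (simp add: sums_iff)

lemma eval_FL: "\<bar>t\<bar> < 1 \<Longrightarrow> eval_fps FL t = (if t = 0 then 0 else - ln (1 - t) / t - 1)"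
  unfolding eval_fps_def FL_def fps_nth_Abs_fps using series_l by (auto simp: sums_iff lco_def)

lemma FH_exp: "\<bar>t\<bar> < 1 \<Longrightarrow> eval_fps FH t = exp (eval_fps FL t)"
proof -
  assume t: "\<bar>t\<bar> < 1"
  show ?thesis
  proof (cases "t = 0")
    case True thus ?thesis using t by (simp add: eval_FH eval_FL efun_def)
  next
    case False
    have "efun (-t) = exp ((1 / (-t)) * ln (1 - t))"
      using t False by (simp add: efun_def powr_def)
    also have "\<dots> = exp (1 + (- ln (1 - t) / t - 1))" by (simp add: field_simps)
    also have "\<dots> = exp 1 * exp (- ln (1 - t) / t - 1)" by (rule exp_add)
    finally show ?thesis using t False by (simp add: eval_FH eval_FL)
  qed
qed

lemma FH_ode: "fps_deriv FH = FH * fps_deriv FL"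
proof -
  have "fps_deriv FH - FH * fps_deriv FL = 0"
  proof (rule fps_real_unique[of 1])
    have r1: "fps_conv_radius (fps_deriv FH) \<ge> 1" using rad_FH fps_conv_radius_deriv[of FH] by (rule order.trans)
    have r2: "fps_conv_radius (fps_deriv FL) \<ge> 1" using rad_FL fps_conv_radius_deriv[of FL] by (rule order.trans)
    have r3: "fps_conv_radius (FH * fps_deriv FL) \<ge> 1"
      by (rule order.trans[OF min.boundedI[OF rad_FH r2] fps_conv_radius_mult])
    have "fps_conv_radius (fps_deriv FH - FH * fps_deriv FL) \<ge> 1"
      by (rule order.trans[OF min.boundedI[OF r1 r3] fps_conv_radius_diff])
    thus "ereal 1 \<le> fps_conv_radius (fps_deriv FH - FH * fps_deriv FL)" by (simp add: one_ereal_def)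
    fix t :: real assume t: "\<bar>t\<bar> < 1"
    have tH: "ereal (norm t) < fps_conv_radius FH" by (rule in_rad[OF t rad_FH])
    have tL: "ereal (norm t) < fps_conv_radius FL" by (rule in_rad[OF t rad_FL])
    have tL': "ereal (norm t) < fps_conv_radius (fps_deriv FL)" by (rule in_rad[OF t r2])
    have tH': "ereal (norm t) < fps_conv_radius (fps_deriv FH)" by (rule in_rad[OF t r1])
    have tP: "ereal (norm t) < fps_conv_radius (FH * fps_deriv FL)" by (rule in_rad[OF t r3])
    have d1: "(eval_fps FH has_field_derivative eval_fps (fps_deriv FH) t) (at t)"
      by (rule has_field_derivative_eval_fps) (use tH in simp)
    have d2: "((\<lambda>t. exp (eval_fps FL t)) has_field_derivative exp (eval_fps FL t) * eval_fps (fps_deriv FL) t) (at t)"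
      by (rule DERIV_chain2[OF DERIV_exp has_field_derivative_eval_fps]) (use tL in simp)
    have d3: "(eval_fps FH has_field_derivative exp (eval_fps FL t) * eval_fps (fps_deriv FL) t) (at t)"
    proof (rule has_field_derivative_transform_within_open[OF d2, of "{t. \<bar>t\<bar> < 1}"])
      show "open {t::real. \<bar>t\<bar> < 1}" by (rule open_Collect_less) (auto intro!: continuous_intros)
    qed (use t FH_exp in auto)
    have "eval_fps (fps_deriv FH) t = exp (eval_fps FL t) * eval_fps (fps_deriv FL) t"
      by (rule DERIV_unique[OF d1 d3])
    also have "\<dots> = eval_fps (FH * fps_deriv FL) t"
      using eval_fps_mult[of t FH "fps_deriv FL"] tH tL' FH_exp[OF t] by simp
    finally show "eval_fps (fps_deriv FH - FH * fps_deriv FL) t = 0"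
      using eval_fps_diff[of t "fps_deriv FH" "FH * fps_deriv FL"] tH' tP by simp
  qed simp
  thus ?thesis by simp
qed



lemma fcoef0: "fcoef 0 = 1" by (simp add: fcoef_def ecoef_def)

lemma f_rec: "real (Suc n) * fcoef (Suc n) = (\<Sum>i=0..n. fcoef i * ((real (n - i) + 1) / (real (n - i) + 2)))"
proof -
  have "fps_nth (fps_deriv FH) n = fps_nth (FH * fps_deriv FL) n" using FH_ode by simp
  hence "real (Suc n) * fcoef (Suc n) = (\<Sum>i=0..n. fcoef i * (real (n - i + 1) * lco (n - i + 1)))"
    by (simp add: fps_mult_nth FH_def FL_def)
  also have "\<dots> = (\<Sum>i=0..n. fcoef i * ((real (n - i) + 1) / (real (n - i) + 2)))"
    by (intro sum.cong refl) (simp add: lco_def add.commute)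
  finally show ?thesis .
qed

lemma f_pos: "fcoef n > 0"
proof (induction n rule: less_induct)
  case (less n)
  show ?case
  proof (cases n)
    case 0 thus ?thesis by (simp add: fcoef0)
  next
    case (Suc p)
    have "0 < (\<Sum>i=0..p. fcoef i * ((real (p - i) + 1) / (real (p - i) + 2)))"
    proof (rule sum_pos2[of _ 0])
      show "0 < fcoef 0 * ((real (p - 0) + 1) / (real (p - 0) + 2))" by (simp add: fcoef0)
      fix i assume "i \<in> {0..p}"
      hence "fcoef i > 0" using less Suc by simp
      thus "0 \<le> fcoef i * ((real (p - i) + 1) / (real (p - i) + 2))" by simp
    qed simp_all
    hence "0 < real (Suc p) * fcoef (Suc p)" using f_rec[of p] by simp
    thus ?thesis using Suc by (simp add: zero_less_mult_iff)
  qed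
qed

definition FB :: "real fps" where "FB = Abs_fps (\<lambda>m. 1 / (real m + 2))"
definition FQ :: "real fps" where "FQ = (1 - fps_X) * FH"

lemma A1: "(1 - fps_X) * (fps_deriv FL + FB) = (1 :: real fps)"
proof -
  have "fps_deriv FL + FB = Abs_fps (\<lambda>_. 1)"
  proof (rule fps_ext)
    fix n
    have "real (n + 1) * lco (n + 1) + 1 / (real n + 2) = 1"
      by (simp add: lco_def field_simps)
    thus "fps_nth (fps_deriv FL + FB) n = fps_nth (Abs_fps (\<lambda>_. 1)) n" by (simp add: FL_def FB_def)
  qed
  moreover have "(1 - fps_X) * Abs_fps (\<lambda>_. 1) = (1 :: real fps)"
    by (rule fps_ext) (simp add: algebra_simps)
  ultimately show ?thesis by simp
qed

lemma Q_ode: "fps_deriv FQ = - (FQ * FB)"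
proof -
  have "fps_deriv FQ = (1 - fps_X) * fps_deriv FH - FH"
    by (simp add: FQ_def algebra_simps)
  also have "\<dots> = (1 - fps_X) * (FH * fps_deriv FL) - FH" by (simp add: FH_ode)
  also have "\<dots> = FH * ((1 - fps_X) * (fps_deriv FL + FB)) - FQ * FB - FH"
    by (simp add: FQ_def algebra_simps)
  also have "\<dots> = - (FQ * FB)" by (simp add: A1)
  finally show ?thesis by simp
qed

definition qc :: "nat \<Rightarrow> real" where "qc n = fps_nth FQ n"

lemma qc0: "qc 0 = 1" by (simp add: qc_def FQ_def FH_def fcoef0 algebra_simps)
lemma qcSuc: "qc (Suc n) = fcoef (Suc n) - fcoef n"
  by (simp add: qc_def FQ_def FH_def algebra_simps)

lemma q_rec: "real (Suc n) * qc (Suc n) = - (\<Sum>i\<le>n. qc i / (real n - real i + 2))"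
proof -
  have "fps_nth (fps_deriv FQ) n = fps_nth (- (FQ * FB)) n" using Q_ode by simp
  hence "real (Suc n) * qc (Suc n) = - (\<Sum>i=0..n. qc i * (1 / (real (n - i) + 2)))"
    by (simp add: fps_mult_nth qc_def FB_def)
  also have "(\<Sum>i=0..n. qc i * (1 / (real (n - i) + 2))) = (\<Sum>i\<le>n. qc i / (real n - real i + 2))"
    by (simp add: atLeast0AtMost of_nat_diff)
  finally show ?thesis .
qed



lemma aux_frac:
  fixes A B C q :: real
  assumes "A > 0" "B > 0"
  shows "(C / B) * (q / A) - q / (A + 1) = q * (C * (A + 1) - B * A) / (B * A * (A + 1))"
proof -
  have "A + 1 > 0" using assms by simp
  thus ?thesis using assms by (simp add: field_simps)
qed

lemma q_step:
  assumes m: "1 \<le> m" and IH: "\<And>j. 1 \<le> j \<Longrightarrow> j \<le> m \<Longrightarrow> qc j < 0"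
  shows "qc (Suc m) < 0"
proof -
  define M where "M = real m"
  have M1: "M \<ge> 1" using m by (simp add: M_def)
  obtain p where p: "m = Suc p" using m by (cases m) auto
  define S1' where "S1' = (\<Sum>i<m. qc i / (M - real i + 1))"
  define S2 where "S2 = (\<Sum>i<m. qc i / (M - real i + 2))"
  define D where "D = (\<Sum>i<m. qc i * (real i / ((M + 2) * (M - real i + 1) * (M - real i + 2))))"
  have R1: "(M + 1) * qc (Suc m) = - S2 - qc m / 2"
  proof -
    have "real (Suc m) * qc (Suc m) = - (\<Sum>i\<le>m. qc i / (real m - real i + 2))" by (rule q_rec)
    also have "(\<Sum>i\<le>m. qc i / (real m - real i + 2)) = S2 + qc m / 2"
      by (simp add: S2_def M_def flip: lessThan_Suc_atMost)
    finally show ?thesis by (simp add: M_def add.commute)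
  qed
  have R0: "M * qc m = - S1'"
  proof -
    have "real (Suc p) * qc (Suc p) = - (\<Sum>i\<le>p. qc i / (real p - real i + 2))" by (rule q_rec)
    also have "(\<Sum>i\<le>p. qc i / (real p - real i + 2)) = S1'"
      unfolding S1'_def M_def p by (simp flip: lessThan_Suc_atMost) (simp add: algebra_simps)
    finally show ?thesis by (simp add: M_def p)
  qed
  have DD: "(M + 1) / (M + 2) * S1' - S2 = D"
  proof -
    have "(M + 1) / (M + 2) * S1' - S2 = (\<Sum>i<m. (M + 1) / (M + 2) * (qc i / (M - real i + 1)) - qc i / (M - real i + 2))"
      by (simp add: S1'_def S2_def sum_distrib_left sum_subtractf)
    also have "\<dots> = D" unfolding D_def
    proof (intro sum.cong refl)
      fix i assume "i \<in> {..<m}"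
      hence i: "real i < M" by (simp add: M_def)
      hence pos: "M - real i + 1 > 0" "M - real i + 2 > 0" "M + 2 > 0" by linarith+
      show "(M + 1) / (M + 2) * (qc i / (M - real i + 1)) - qc i / (M - real i + 2) =
            qc i * (real i / ((M + 2) * (M - real i + 1) * (M - real i + 2)))"
      proof -
        define A where "A = M - real i + 1"
        have A: "A > 0" "M - real i + 2 = A + 1" using pos by (simp_all add: A_def)
        have num: "(M + 1) * (A + 1) - (M + 2) * A = real i" by (simp add: A_def algebra_simps)
        have Aeq: "M - real i + 1 = A" by (simp add: A_def)
        have "(M + 1) / (M + 2) * (qc i / A) - qc i / (A + 1)
              = qc i * ((M + 1) * (A + 1) - (M + 2) * A) / ((M + 2) * A * (A + 1))"
          by (rule aux_frac[OF A(1) pos(3)])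
        hence e: "(M + 1) / (M + 2) * (qc i / A) - qc i / (A + 1)
              = qc i * (real i / ((M + 2) * A * (A + 1)))" unfolding num by simp
        show ?thesis unfolding A(2) Aeq by (rule e)
      qed
    qed
    finally show ?thesis .
  qed
  have Dn: "D \<le> 0" unfolding D_def
  proof (rule sum_nonpos)
    fix i assume "i \<in> {..<m}"
    hence i: "real i < M" "i < m" by (auto simp: M_def)
    hence pos: "M - real i + 1 > 0" "M - real i + 2 > 0" "M + 2 > 0" by linarith+
    have nn: "real i / ((M + 2) * (M - real i + 1) * (M - real i + 2)) \<ge> 0" using pos by simp
    show "qc i * (real i / ((M + 2) * (M - real i + 1) * (M - real i + 2))) \<le> 0"
    proof (cases "i = 0")
      case True thus ?thesis by simp
    next
      case False
      hence "qc i < 0" using IH i by simp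
      hence "qc i \<le> 0" by simp
      from mult_nonpos_nonneg[OF this nn] show ?thesis .
    qed
  qed
  have eq: "(M + 1) * qc (Suc m) = D + ((M + 1) * M / (M + 2) - 1 / 2) * qc m"
  proof -
    have "(M + 1) * qc (Suc m) = ((M + 1) / (M + 2) * S1' - S2) - (M + 1) / (M + 2) * S1' - qc m / 2"
      using R1 by simp
    also have "\<dots> = D + (M + 1) / (M + 2) * (M * qc m) - qc m / 2" using DD R0 by simp
    also have "\<dots> = D + ((M + 1) * M / (M + 2) - 1 / 2) * qc m" by (simp add: algebra_simps)
    finally show ?thesis .
  qed
  have c: "(M + 1) * M / (M + 2) - 1 / 2 > 0"
  proof -
    have h: "2 * M \<le> (M + 1) * M" using mult_right_mono[of 2 "M + 1" M] M1 by simp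
    have "(M + 2) / 2 < 2 * M" using M1 by (simp add: divide_less_eq)
    hence "(M + 2) / 2 < (M + 1) * M" using h by (rule less_le_trans)
    hence "1 / 2 < (M + 1) * M / (M + 2)" using M1 by (simp add: field_simps)
    thus ?thesis by simp
  qed
  have "qc m < 0" using IH[of m] m by simp
  hence "((M + 1) * M / (M + 2) - 1 / 2) * qc m < 0" using c by (simp add: mult_pos_neg)
  hence "(M + 1) * qc (Suc m) < 0" using eq Dn by linarith
  thus ?thesis using M1 by (simp add: mult_less_0_iff)
qed

lemma q_neg: "1 \<le> n \<Longrightarrow> qc n < 0"
proof -
  have "\<forall>j. 1 \<le> j \<and> j \<le> m \<longrightarrow> qc j < 0" for m
  proof (induction m)
    case 0 thus ?case by simp
  next
    case (Suc m)
    show ?case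
    proof (intro allI impI)
      fix j assume j: "1 \<le> j \<and> j \<le> Suc m"
      show "qc j < 0"
      proof (cases "j \<le> m")
        case True thus ?thesis using Suc j by simp
      next
        case False
        hence jm: "j = Suc m" using j by simp
        show ?thesis
        proof (cases "m = 0")
          case True
          have "real (Suc 0) * qc (Suc 0) = - (\<Sum>i\<le>0. qc i / (real 0 - real i + 2))" by (rule q_rec)
          thus ?thesis using jm True by (simp add: qc0)
        next
          case False
          thus ?thesis using jm q_step[of m] Suc by simp
        qed
      qed
    qed
  qed
  thus "1 \<le> n \<Longrightarrow> qc n < 0" by blast
qed

lemma f_decr: "fcoef (Suc n) < fcoef n"
  using q_neg[of "Suc n"] by (simp add: qcSuc)



lemma neg1_sq: "(-1::real)^k * (-1)^k = 1" by (simp flip: power_mult_distrib)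

lemma neg1_kk: "(-1::real)^(k+k) = 1" by (simp add: power_add neg1_sq)

lemma ecoef_f: "ecoef k = (-1)^k * fcoef k"
proof -
  have "(-1)^k * fcoef k = ((-1)^k * (-1)^k) * ecoef k" by (simp add: fcoef_def mult.assoc)
  thus ?thesis by (simp add: neg1_sq)
qed

lemma epart_sum: "epart n x = (\<Sum>k<Suc n. exp 1 * ecoef k * x^k)"
proof (induction n)
  case 0 thus ?case by (simp add: epart_def ecoef_def)
next
  case (Suc n)
  have "epart (Suc n) x = epart n x + exp 1 * ((-1)^(Suc n) * fcoef (Suc n) * x^(Suc n))"
    by (simp add: epart_def algebra_simps)
  also have "(-1)^(Suc n) * fcoef (Suc n) = ecoef (Suc n)"
    by (simp only: ecoef_f)
  finally show ?case using Suc by (simp add: mult.assoc)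
qed

lemma tail_sums:
  assumes "\<bar>x\<bar> < 1"
  shows "(\<lambda>j. exp 1 * ecoef (j + m) * x^(j + m)) sums (efun x - (\<Sum>k<m. exp 1 * ecoef k * x^k))"
  using sums_split_initial_segment[OF series_e[OF assms], of m] by simp

lemma part_iii: "epart n 0 = efun 0 \<and> efun 0 = exp 1"
proof -
  have "(\<Sum>k=1..n. (-1)^k * fcoef k * (0::real)^k) = 0" by (intro sum.neutral) auto
  thus ?thesis by (simp add: epart_def efun_def)
qed

lemma part_ii:
  assumes "-1 < x" "x < 0"
  shows "epart n x < epart (Suc n) x \<and> epart n x < efun x"
proof -
  have ax: "\<bar>x\<bar> < 1" using assms by simp
  have apos: "exp 1 * ecoef k * x^k > 0" for k
  proof -
    have eq: "ecoef k * x^k = fcoef k * (-x)^k"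
      by (simp add: ecoef_f power_minus[of x] mult_ac)
    have pos: "fcoef k * (-x)^k > 0" using f_pos assms by simp
    have e: "exp 1 * ecoef k * x^k = exp 1 * (fcoef k * (-x)^k)" using eq by (simp only: mult.assoc)
    show ?thesis unfolding e by (rule mult_pos_pos) (simp_all add: pos)
  qed
  have "epart (Suc n) x = epart n x + exp 1 * ecoef (Suc n) * x^(Suc n)"
    by (simp only: epart_sum sum.lessThan_Suc[of _ "Suc n"])
  hence 1: "epart n x < epart (Suc n) x" using apos[of "Suc n"] by simp
  have ts: "(\<lambda>j. exp 1 * ecoef (j + Suc n) * x^(j + Suc n)) sums (efun x - epart n x)"
    using tail_sums[OF ax, of "Suc n"] by (simp add: epart_sum)
  have sm: "summable (\<lambda>j. exp 1 * ecoef (j + Suc n) * x^(j + Suc n))"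
    using ts by (rule sums_summable)
  have "0 < (\<Sum>j. exp 1 * ecoef (j + Suc n) * x^(j + Suc n))"
    by (rule suminf_pos[OF sm]) (rule apos)
  hence "0 < efun x - epart n x" using ts by (simp add: sums_iff)
  with 1 show ?thesis by simp
qed

lemma part_i:
  assumes "0 < x" "x < 1"
  shows "(\<forall>k::nat. epart (2*k+1) x < epart (2*k+3) x) \<and>
         (\<forall>k::nat. epart (2*k+1) x < efun x) \<and>
         (\<forall>k::nat. epart (2*k+2) x < epart (2*k) x) \<and>
         (\<forall>k::nat. efun x < epart (2*k) x)"
proof -
  have ax: "\<bar>x\<bar> < 1" using assms by simp
  define u where "u k = exp 1 * fcoef k * x^k" for k
  define a where "a k = exp 1 * ecoef k * x^k" for k
  define S where "S m = (\<Sum>k<m. a k)" for m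
  have au: "a k = (-1)^k * u k" for k by (simp add: a_def u_def ecoef_f mult_ac)
  have upos: "u k > 0" for k using f_pos assms by (simp add: u_def)
  have udec: "u (Suc k) < u k" for k
  proof -
    have "fcoef (Suc k) * x < fcoef (Suc k)" using f_pos[of "Suc k"] assms by simp
    also have "\<dots> < fcoef k" by (rule f_decr)
    finally have "fcoef (Suc k) * x * x^k < fcoef k * x^k"
      using assms by (intro mult_strict_right_mono) simp_all
    thus ?thesis by (simp add: u_def mult_ac)
  qed
  have ep: "epart n x = S (Suc n)" for n by (simp add: epart_sum S_def a_def)
  have R: "0 < (-1)^m * (efun x - S m)" for m
  proof -
    have "(\<lambda>j. a (j + m)) sums (efun x - S m)"
      using tail_sums[OF ax, of m] by (simp add: a_def S_def)
    hence "(\<lambda>j. (-1)^m * a (j + m)) sums ((-1)^m * (efun x - S m))" by (rule sums_mult)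
    moreover have "(\<lambda>j. (-1)^m * a (j + m)) = (\<lambda>j. (-1)^j * u (j + m))"
    proof
      fix j
      have "(-1)^m * a (j + m) = ((-1)^m * (-1)^m) * (-1)^j * u (j + m)"
        by (simp add: au power_add mult_ac)
      thus "(-1)^m * a (j + m) = (-1)^j * u (j + m)" by (simp add: neg1_sq)
    qed
    ultimately have s: "(\<lambda>j. (-1)^j * u (j + m)) sums ((-1)^m * (efun x - S m))" by simp
    have g: "(\<lambda>n. \<Sum>j\<in>{n * 2..<n * 2 + 2}. (-1)^j * u (j + m)) sums ((-1)^m * (efun x - S m))"
      by (rule sums_group[OF s]) simp
    have geq: "(\<Sum>j\<in>{n * 2..<n * 2 + 2}. (-1)^j * u (j + m)) = u (n * 2 + m) - u (Suc (n * 2 + m))" for n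
    proof -
      have "{n * 2..<n * 2 + 2} = {n * 2, Suc (n * 2)}" by auto
      moreover have "((-1::real)^n)^2 = 1" by (simp add: power2_eq_square neg1_sq)
      ultimately show ?thesis by (simp add: power_mult)
    qed
    have "0 < (\<Sum>n. \<Sum>j\<in>{n * 2..<n * 2 + 2}. (-1)^j * u (j + m))"
      by (rule suminf_pos) (use g udec in \<open>auto simp: sums_iff geq\<close>)
    thus ?thesis using g by (simp add: sums_iff)
  qed
  have Sstep: "S (Suc m) = S m + (-1)^m * u m" for m by (simp add: S_def au)
  have c1: "epart (2*k+1) x < epart (2*k+3) x" for k
  proof -
    have "epart (2*k+3) x = epart (2*k+1) x + (u (2*k+2) - u (2*k+3))"
      unfolding ep by (simp add: Sstep numeral_3_eq_3 eval_nat_numeral neg1_kk)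
    thus ?thesis using udec[of "2*k+2"] by (simp add: eval_nat_numeral)
  qed
  have c2: "epart (2*k+1) x < efun x" for k
    using R[of "2*k+2"] unfolding ep by (simp add: eval_nat_numeral neg1_kk)
  have c3: "epart (2*k+2) x < epart (2*k) x" for k
  proof -
    have "epart (2*k+2) x = epart (2*k) x + (u (2*k+2) - u (2*k+1))"
      unfolding ep by (simp add: Sstep eval_nat_numeral neg1_kk)
    thus ?thesis using udec[of "2*k+1"] by (simp add: eval_nat_numeral)
  qed
  have c4: "efun x < epart (2*k) x" for k
    using R[of "2*k+1"] unfolding ep by simp
  show ?thesis using c1 c2 c3 c4 by blast
qed

theorem mainTheorem3:
  shows "(\<forall>x::real. 0 < x \<and> x < 1 \<longrightarrow>
            (\<forall>k::nat. epart (2*k+1) x < epart (2*k+3) x) \<and>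
            (\<forall>k::nat. epart (2*k+1) x < efun x) \<and>
            (\<forall>k::nat. epart (2*k+2) x < epart (2*k) x) \<and>
            (\<forall>k::nat. efun x < epart (2*k) x))
       \<and> (\<forall>x::real. -1 < x \<and> x < 0 \<longrightarrow>
            (\<forall>n::nat. epart n x < epart (Suc n) x \<and> epart n x < efun x))
       \<and> (\<forall>n::nat. epart n 0 = efun 0 \<and> efun 0 = exp 1)"
  using part_i part_ii part_iii by blast


end
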